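(* Let $s,t$ be real numbers with $s > t > 0$ and let $n\geq 4$ be an integer. Then $|\det U_n| < M_n$, where $M_n$ is the maximum of $|\det A|$ over all $A \in \mathcal{G}_s^{n\times n}([0,t])$; that is, $U_n$ does not attain the maximum absolute determinant in $\mathcal{G}_s^{n\times n}([0,t])$.
   Context: For a real number $s$, a positive integer $n$ and a set $P \subseteq \mathbb{R}$, $\mathcal{G}_s^{n\times n}(P)$ denotes the set of all $n\times n$ real upper Hessenberg matrices $A=(a_{ij})$ with $a_{i+1,i} = s$ for $1\le i\le n-1$, $a_{ij}=0$ for $i > j+1$, and $a_{ij}\in P$ for all $i \le j$. $U_n = U_n(s,t)$ is the matrix in $\mathcal{G}_s^{n\times n}(\{0,t\})$ with $a_{ij} = t$ if $j \ge i$ and $j-i$ is even, and $a_{ij}=0$ if $j>i$ and $j-i$ is odd. *)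

theory Defs
  imports "Jordan_Normal_Form.Determinant"
begin

text \<open>Matrices are 0-indexed: entry (i,j) corresponds to a_{i+1,j+1} in the paper.\<close>

definition hess_set :: "real \<Rightarrow> nat \<Rightarrow> real set \<Rightarrow> real mat set" where
  "hess_set s n P = {A. A \<in> carrier_mat n n \<and>
     (\<forall>i. i + 1 < n \<longrightarrow> A $$ (i+1, i) = s) \<and>
     (\<forall>i<n. \<forall>j<n. i > j + 1 \<longrightarrow> A $$ (i, j) = 0) \<and>
     (\<forall>i<n. \<forall>j<n. i \<le> j \<longrightarrow> A $$ (i, j) \<in> P)}"

definition U_mat :: "nat \<Rightarrow> real \<Rightarrow> real \<Rightarrow> real mat" where
  "U_mat n s t = mat n n (\<lambda>(i, j).
     if i = j + 1 then s
     else if j \<ge> i \<and> even (j - i) then t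
     else 0)"

end

theory Submission
  imports Defs
begin

definition Fm :: "(nat \<Rightarrow> nat \<Rightarrow> real) \<Rightarrow> nat \<Rightarrow> nat \<Rightarrow> real mat" where
  "Fm e k c = mat k k (\<lambda>(i,j). if Suc j < k then e i j else e i c)"

lemma Fm_one: "det (Fm e (Suc 0) c) = e 0 c"
  unfolding Fm_def by (simp add: det_def)

lemma Fm_step:
  assumes z: "\<And>j. j < m \<Longrightarrow> e (Suc m) j = 0" and sd: "e (Suc m) m = s"
  shows "det (Fm e (Suc (Suc m)) c) = e (Suc m) c * det (Fm e (Suc m) m) - s * det (Fm e (Suc m) c)"
proof -
  let ?A = "Fm e (Suc (Suc m)) c"
  have A: "?A \<in> carrier_mat (Suc (Suc m)) (Suc (Suc m))" unfolding Fm_def by auto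
  have "det ?A = (\<Sum>j<Suc (Suc m). ?A $$ (Suc m, j) * cofactor ?A (Suc m) j)"
    by (rule laplace_expansion_row[OF A], simp)
  also have "\<dots> = (\<Sum>j<m. ?A $$ (Suc m, j) * cofactor ?A (Suc m) j) + ?A $$ (Suc m, m) * cofactor ?A (Suc m) m
     + ?A $$ (Suc m, Suc m) * cofactor ?A (Suc m) (Suc m)"
    by simp
  also have "(\<Sum>j<m. ?A $$ (Suc m, j) * cofactor ?A (Suc m) j) = 0"
    by (rule sum.neutral, auto simp: Fm_def z)
  also have "?A $$ (Suc m, m) = s" by (simp add: Fm_def sd)
  also have "?A $$ (Suc m, Suc m) = e (Suc m) c" by (simp add: Fm_def)
  also have "mat_delete ?A (Suc m) m = Fm e (Suc m) c"
    by (rule eq_matI, auto simp: Fm_def mat_delete_def)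
  then have "cofactor ?A (Suc m) m = - det (Fm e (Suc m) c)"
    by (simp add: cofactor_def)
  also have "mat_delete ?A (Suc m) (Suc m) = Fm e (Suc m) m"
    by (rule eq_matI, auto simp: Fm_def mat_delete_def less_Suc_eq)
  then have "cofactor ?A (Suc m) (Suc m) = det (Fm e (Suc m) m)"
    by (simp add: cofactor_def)
  finally show ?thesis by simp
qed

lemma Fm_full: "Fm e n (n - 1) = mat n n (\<lambda>(i,j). e i j)"
  apply (rule eq_matI)
  apply (auto simp: Fm_def)
  apply (subgoal_tac "j = n - 1")
  apply auto
  done

lemma nat3_cases: "(m = 0 \<Longrightarrow> P) \<Longrightarrow> (m = 1 \<Longrightarrow> P) \<Longrightarrow> (\<And>k. m = Suc (Suc k) \<Longrightarrow> P) \<Longrightarrow> P"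
  by (metis One_nat_def not0_implies_Suc)

fun uu :: "real \<Rightarrow> real \<Rightarrow> nat \<Rightarrow> real" where
  "uu s t 0 = 1"
| "uu s t (Suc 0) = t"
| "uu s t (Suc (Suc 0)) = t^2"
| "uu s t (Suc (Suc (Suc k))) = t * uu s t (Suc (Suc k)) + s^2 * uu s t (Suc k)"

fun rr :: "real \<Rightarrow> real \<Rightarrow> nat \<Rightarrow> real" where
  "rr s t 0 = 1"
| "rr s t (Suc 0) = t"
| "rr s t (Suc (Suc 0)) = - s * t"
| "rr s t (Suc (Suc (Suc 0))) = - 2 * s * t^2"
| "rr s t (Suc (Suc (Suc (Suc k)))) = t * rr s t (Suc (Suc (Suc k))) + s^2 * rr s t (Suc (Suc k))"

definition eU :: "real \<Rightarrow> real \<Rightarrow> nat \<Rightarrow> nat \<Rightarrow> real" where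
  "eU s t i j = (if i = Suc j then s else if i \<le> j \<and> even (j - i) then t else 0)"

definition qq :: "nat \<Rightarrow> nat \<Rightarrow> bool" where
  "qq n v = (2 \<le> v \<and> v + 2 \<le> n)"

definition eA :: "nat \<Rightarrow> real \<Rightarrow> real \<Rightarrow> nat \<Rightarrow> nat \<Rightarrow> real" where
  "eA n s t i j = (if i = Suc j then s else if i \<le> j \<and> (even (j - i) = (qq n i = qq n (Suc j))) then t else 0)"

lemma U_det_gen:
  "m \<le> c \<Longrightarrow> det (Fm (eU s t) (Suc m) c) =
     (if even (c - m) then uu s t (Suc m) else if m = 0 then 0 else - s * uu s t m)"
proof (induction m arbitrary: c)
  case 0
  then show ?case by (simp add: Fm_one eU_def)
next
  case (Suc m)
  have st: "det (Fm (eU s t) (Suc (Suc m)) c) = eU s t (Suc m) c * det (Fm (eU s t) (Suc m) m) - s * det (Fm (eU s t) (Suc m) c)"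
    by (rule Fm_step, auto simp: eU_def)
  have d: "det (Fm (eU s t) (Suc m) m) = uu s t (Suc m)" using Suc.IH[of m] by simp
  have ih: "det (Fm (eU s t) (Suc m) c) = (if even (c - m) then uu s t (Suc m) else if m = 0 then 0 else - s * uu s t m)"
    using Suc by simp
  have e1: "eU s t (Suc m) c = (if even (c - Suc m) then t else 0)"
    using Suc.prems by (auto simp: eU_def)
  show ?case
  proof (cases "even (c - Suc m)")
    case True
    then have "odd (c - m)" using Suc.prems by (metis Suc_diff_Suc Suc_le_lessD even_Suc)
    then show ?thesis using True st d ih e1
      by (cases m rule: nat3_cases; simp add: power2_eq_square algebra_simps)
  next
    case False
    then have "even (c - m)" using Suc.prems by (metis Suc_diff_Suc Suc_le_lessD even_Suc)
    then show ?thesis using False st d ih e1 by simp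
  qed
qed

lemma par_shift: "Suc m \<le> c \<Longrightarrow> even (c - m) = odd (c - Suc m)"
  by (metis Suc_diff_Suc Suc_le_lessD even_Suc)

lemma A_phase1:
  "m + 3 \<le> n \<Longrightarrow> m \<le> c \<Longrightarrow> c + 3 \<le> n \<Longrightarrow> 1 \<le> c \<Longrightarrow>
   det (Fm (eA n s t) (Suc m) c) =
     (if even (c - m) then (if m = 0 then 0 else rr s t (Suc m))
      else (if m = 0 then t else if m = 1 then t^2 else - s * rr s t m))"
proof (induction m arbitrary: c)
  case 0
  then show ?case by (auto simp: Fm_one eA_def qq_def)
next
  case (Suc m)
  have st: "det (Fm (eA n s t) (Suc (Suc m)) c) = eA n s t (Suc m) c * det (Fm (eA n s t) (Suc m) m) - s * det (Fm (eA n s t) (Suc m) c)"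
    by (rule Fm_step, auto simp: eA_def)
  have d: "det (Fm (eA n s t) (Suc m) m) = rr s t (Suc m)"
  proof (cases "m = 0")
    case True
    then show ?thesis by (simp add: Fm_one eA_def qq_def)
  next
    case False
    then show ?thesis using Suc.IH[of m] Suc.prems by simp
  qed
  have ih: "det (Fm (eA n s t) (Suc m) c) = (if even (c - m) then (if m = 0 then 0 else rr s t (Suc m))
      else (if m = 0 then t else if m = 1 then t^2 else - s * rr s t m))"
    using Suc by simp
  have e1: "eA n s t (Suc m) c = (if even (c - Suc m) then t else 0)" if "m \<noteq> 0"
    using Suc.prems that by (auto simp: eA_def qq_def)
  have e0: "eA n s t (Suc m) c = (if even c then t else 0)" if "m = 0"
    using Suc.prems that by (auto simp: eA_def qq_def)
  have ps: "even (c - m) = odd (c - Suc m)" using Suc.prems par_shift by blast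
  show ?case
  proof (cases m rule: nat3_cases)
    case 1
    then show ?thesis using st d ih e0 ps by (auto simp: power2_eq_square)
  next
    case 2
    then show ?thesis using st d ih e1 ps by (auto simp: power2_eq_square algebra_simps)
  next
    case (3 k)
    then show ?thesis using st d ih e1 ps by (auto simp: power2_eq_square algebra_simps)
  qed
qed

lemma A_D: "m + 3 \<le> n \<Longrightarrow> det (Fm (eA n s t) (Suc m) m) = rr s t (Suc m)"
  by (cases "m = 0") (auto simp: Fm_one eA_def qq_def A_phase1)

lemma A_phase2:
  "m + 2 \<le> n \<Longrightarrow> c < n \<Longrightarrow> n \<le> c + 2 \<Longrightarrow>
   det (Fm (eA n s t) (Suc m) c) =
     (if even (c - m) then (if m = 0 then t else if m = 1 then t^2 else - s * rr s t m)
      else (if m = 0 then 0 else rr s t (Suc m)))"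
proof (induction m)
  case 0
  then show ?case by (auto simp: Fm_one eA_def qq_def)
next
  case (Suc m)
  have st: "det (Fm (eA n s t) (Suc (Suc m)) c) = eA n s t (Suc m) c * det (Fm (eA n s t) (Suc m) m) - s * det (Fm (eA n s t) (Suc m) c)"
    by (rule Fm_step, auto simp: eA_def)
  have d: "det (Fm (eA n s t) (Suc m) m) = rr s t (Suc m)"
    using A_D[of m n s t] Suc.prems by simp
  have ih: "det (Fm (eA n s t) (Suc m) c) = (if even (c - m) then (if m = 0 then t else if m = 1 then t^2 else - s * rr s t m)
      else (if m = 0 then 0 else rr s t (Suc m)))"
    using Suc by simp
  have e1: "eA n s t (Suc m) c = (if odd (c - Suc m) then t else 0)" if "m \<noteq> 0"
    using Suc.prems that by (auto simp: eA_def qq_def)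
  have e0: "eA n s t (Suc m) c = (if odd c then t else 0)" if "m = 0"
    using Suc.prems that by (auto simp: eA_def qq_def)
  have ps: "even (c - m) = odd (c - Suc m)" using Suc.prems par_shift by simp
  show ?case
  proof (cases m rule: nat3_cases)
    case 1
    then show ?thesis using st d ih e0 ps by (auto simp: power2_eq_square)
  next
    case 2
    then show ?thesis using st d ih e1 ps by (auto simp: power2_eq_square algebra_simps)
  next
    case (3 k)
    then show ?thesis using st d ih e1 ps by (auto simp: power2_eq_square algebra_simps)
  qed
qed

lemma det_A:
  assumes "4 \<le> n"
  shows "det (mat n n (\<lambda>(i,j). eA n s t i j)) = - s * t * rr s t (n - 2) - s * rr s t (n - 1)"
proof -
  define m where "m = n - 2"
  have n: "n = Suc (Suc m)" using assms unfolding m_def by simp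
  have "mat n n (\<lambda>(i,j). eA n s t i j) = Fm (eA n s t) (Suc (Suc m)) (Suc m)"
    using Fm_full[of "eA n s t" n] n by simp
  also have "det \<dots> = eA n s t (Suc m) (Suc m) * det (Fm (eA n s t) (Suc m) m) - s * det (Fm (eA n s t) (Suc m) (Suc m))"
    by (rule Fm_step, auto simp: eA_def)
  also have "eA n s t (Suc m) (Suc m) = t" using n by (simp add: eA_def qq_def)
  also have "det (Fm (eA n s t) (Suc m) m) = - s * rr s t m"
    using A_phase2[of m n m s t] n assms by simp
  also have "det (Fm (eA n s t) (Suc m) (Suc m)) = rr s t (Suc m)"
    using A_phase2[of m n "Suc m" s t] n assms by simp
  finally show ?thesis using n by simp
qed

lemma det_U: "det (U_mat n s t) = uu s t n"
proof (cases n)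
  case 0
  then show ?thesis by (simp add: U_mat_def det_def)
next
  case (Suc m)
  have "U_mat n s t = Fm (eU s t) n (n - 1)"
    unfolding Fm_full by (rule eq_matI, auto simp: U_mat_def eU_def)
  then show ?thesis using U_det_gen[of m m s t] Suc by simp
qed

lemma uu_pos: "t > 0 \<Longrightarrow> uu s t n > 0"
  by (induction s t n rule: uu.induct) (auto simp: add_pos_nonneg)

lemma L_pos:
  assumes "s > t" "t > 0" "2 \<le> m"
  shows "- s * t * rr s t m - s * rr s t (Suc m) - uu s t (Suc (Suc m)) > 0"
  using assms(3)
proof (induction m rule: less_induct)
  case (less m)
  have s0: "s > 0" using assms by simp
  have sq: "s^2 - t^2 > 0" using assms by (simp add: power_strict_mono)
  show ?case
  proof (cases "m \<le> 3")
    case True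
    then have "m = 2 \<or> m = 3" using less.prems by auto
    then show ?thesis
    proof
      assume "m = 2"
      then have "- s * t * rr s t m - s * rr s t (Suc m) - uu s t (Suc (Suc m)) = t^2 * (s^2 - t^2)"
        by (simp add: numeral_eq_Suc power2_eq_square algebra_simps)
      then show ?thesis using sq assms by simp
    next
      assume "m = 3"
      then have "- s * t * rr s t m - s * rr s t (Suc m) - uu s t (Suc (Suc m)) = t^3 * (s^2 - t^2)"
        by (simp add: numeral_eq_Suc power2_eq_square power3_eq_cube algebra_simps)
      then show ?thesis using sq assms by simp
    qed
  next
    case False
    define k where "k = m - 4"
    have m: "m = Suc (Suc (Suc (Suc k)))" using False unfolding k_def by simp
    define L where "L j = - s * t * rr s t j - s * rr s t (Suc j) - uu s t (Suc (Suc j))" for j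
    have a: "L (m - 1) > 0" using less.IH[of "m - 1"] False unfolding L_def by simp
    have b: "L (m - 2) > 0" using less.IH[of "m - 2"] False unfolding L_def by simp
    have "L m = t * L (m - 1) + s^2 * L (m - 2)"
      unfolding L_def m by (simp add: algebra_simps power2_eq_square)
    then have "L m > 0" using a b assms by (simp add: add_pos_pos)
    then show ?thesis unfolding L_def by simp
  qed
qed

lemma det_bound:
  assumes B: "B \<in> carrier_mat n n" and M: "\<And>i j. i < n \<Longrightarrow> j < n \<Longrightarrow> \<bar>B $$ (i,j)\<bar> \<le> M"
  shows "\<bar>det B\<bar> \<le> real (card {p. p permutes {0..<n}}) * M^n"
proof -
  have dr: "dim_row B = n" "dim_col B = n" using B by auto
  have "\<bar>det B\<bar> = \<bar>\<Sum>p \<in> {p. p permutes {0..<n}}. signof p * (\<Prod>i = 0..<n. B $$ (i, p i))\<bar>"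
    unfolding det_def dr by simp
  also have "\<dots> \<le> (\<Sum>p \<in> {p. p permutes {0..<n}}. \<bar>signof p * (\<Prod>i = 0..<n. B $$ (i, p i))\<bar>)"
    by (rule sum_abs)
  also have "\<dots> \<le> (\<Sum>p \<in> {p. p permutes {0..<n}}. M^n)"
  proof (rule sum_mono)
    fix p assume "p \<in> {p. p permutes {0..<n}}"
    then have p: "p permutes {0..<n}" by simp
    have "\<bar>signof p * (\<Prod>i = 0..<n. B $$ (i, p i))\<bar> = (\<Prod>i = 0..<n. \<bar>B $$ (i, p i)\<bar>)"
      by (simp add: abs_mult abs_prod sign_def)
    also have "\<dots> \<le> (\<Prod>i = 0..<n. M)"
      proof (rule prod_mono)
      fix i assume "i \<in> {0..<n}"
      then have "i < n" "p i < n" using permutes_in_image[OF p, of i] by auto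
      then show "0 \<le> \<bar>B $$ (i, p i)\<bar> \<and> \<bar>B $$ (i, p i)\<bar> \<le> M" using M by auto
    qed
    finally show "\<bar>signof p * (\<Prod>i = 0..<n. B $$ (i, p i))\<bar> \<le> M^n" by simp
  qed
  also have "\<dots> = real (card {p. p permutes {0..<n}}) * M^n" by simp
  finally show ?thesis .
qed

lemma A_mem:
  assumes "t > 0"
  shows "mat n n (\<lambda>(i,j). eA n s t i j) \<in> hess_set s n {0..t}"
  using assms unfolding hess_set_def by (auto simp: eA_def)

lemma hess_bdd:
  assumes "s > 0" "t > 0"
  shows "bdd_above ((\<lambda>A. \<bar>det A\<bar>) ` hess_set s n {0..t})"
proof -
  have "\<bar>det B\<bar> \<le> real (card {p. p permutes {0..<n}}) * (s + t)^n" if B: "B \<in> hess_set s n {0..t}" for B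
  proof (rule det_bound)
    show "B \<in> carrier_mat n n" using B by (simp add: hess_set_def)
    fix i j assume ij: "i < n" "j < n"
    show "\<bar>B $$ (i,j)\<bar> \<le> s + t"
    proof -
      consider "i = j + 1" | "i > j + 1" | "i \<le> j" by linarith
      then show ?thesis
      proof cases
        case 1
        then have "B $$ (i,j) = s" using B ij by (auto simp: hess_set_def)
        then show ?thesis using assms by simp
      next
        case 2
        then have "B $$ (i,j) = 0" using B ij by (auto simp: hess_set_def)
        then show ?thesis using assms by simp
      next
        case 3
        then have "B $$ (i,j) \<in> {0..t}" using B ij by (auto simp: hess_set_def)
        then show ?thesis using assms by simp
      qed
    qed
  qed
  then show ?thesis unfolding bdd_above_def by blast
qed

theorem proposition4p1:
  fixes s t :: real and n :: nat
  assumes "s > t" and "t > 0" and "n \<ge> 4"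
  shows "\<bar>det (U_mat n s t)\<bar> < Sup ((\<lambda>A. \<bar>det A\<bar>) ` hess_set s n {0..t})"
proof -
  let ?A = "mat n n (\<lambda>(i,j). eA n s t i j)"
  have bdd: "bdd_above ((\<lambda>A. \<bar>det A\<bar>) ` hess_set s n {0..t})"
    using hess_bdd assms by simp
  have mem: "\<bar>det ?A\<bar> \<in> (\<lambda>A. \<bar>det A\<bar>) ` hess_set s n {0..t}"
    using A_mem[OF assms(2)] by blast
  have le: "\<bar>det ?A\<bar> \<le> Sup ((\<lambda>A. \<bar>det A\<bar>) ` hess_set s n {0..t})"
    by (rule cSup_upper[OF mem bdd])
  have dA: "det ?A = - s * t * rr s t (n - 2) - s * rr s t (Suc (n - 2))"
    using det_A[OF assms(3)] assms(3) by (simp add: Suc_diff_Suc numeral_2_eq_2)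
  have nn: "Suc (Suc (n - 2)) = n" using assms(3) by simp
  have "det ?A - uu s t n > 0"
    using L_pos[OF assms(1,2), of "n - 2"] assms(3) dA nn by simp
  moreover have "det (U_mat n s t) = uu s t n" by (rule det_U)
  moreover have "uu s t n > 0" using uu_pos assms by simp
  ultimately show ?thesis using le by simp
qed

end
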